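(* Consider the alternating algorithm (Algorithm 1) described in the context, started from any feasible $(\mathbf S_1^{(0)},\mathbf S_2^{(0)})$. The algorithm is convergent: the sequence of objective values $\tilde e_R(\mathbf T^{(k)},\mathbf S^{(k)})$ is non-increasing and converges, and the limit point $(\bar{\mathbf T}_R,\bar{\mathbf S}_1,\bar{\mathbf S}_2)$ of the iteration is a stationary point (satisfies the KKT conditions) of the problem $\min_{\mathbf T_R,\mathbf S_1,\mathbf S_2}\tilde e_R(\mathbf T_R,\mathbf S)$ subject to $\mathrm{Tr}(\mathbf S_i\mathbf S_i^H)\le\tau_i$, $i=1,2$.
   Context: MAC phase of a MIMO two-way relay system: sources with $N_1,N_2$ antennas, relay with $M$ antennas. Let $\mathbf Z_{t,H_i}\in\mathbb C^{N_i\times N_i}$, $\mathbf Z_{r,H}\in\mathbb C^{M\times M}$ be Hermitian positive definite with $\mathbf Z_{t,H_i}=\mathbf C_{t,H_i}\mathbf C_{t,H_i}^H$, $\mathbf Z_{r,H}=\mathbf C_{r,H}\mathbf C_{r,H}^H$, $\mathbf C_{t,H}=\mathrm{Blkdiag}(\mathbf C_{t,H_1},\mathbf C_{t,H_2})$. The relay receives $\mathbf Y_R=\mathbf H_1\mathbf S_1+\mathbf H_2\mathbf S_2+\mathbf N_R$ with $\mathbf H_i=\mathbf C_{r,H}\mathbf W_{H_i}\mathbf C_{t,H_i}^T$, $\mathbf W_{H_i}$ i.i.d. $\mathcal{CN}(0,1)$ entries, training $\mathbf S_i\in\mathbb C^{N_i\times L_S}$, $\mathbf S=[\mathbf S_1^T,\mathbf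 S_2^T]^T$, $\mathrm{vec}(\mathbf N_R)\sim\mathcal{CN}(\mathbf 0,\mathbf K_R)$, $\mathbf K_R=\mathbf K_{q,R}\otimes\mathbf K_{r,R}$ positive definite. Power limits $\tau_1,\tau_2>0$. Let $\mathbf F(\mathbf S)=\mathbf S^T\mathbf C_{t,H}\otimes\mathbf C_{r,H}$, $\mathbf C_{0,H}=\mathbf C_{t,H}^H\mathbf C_{t,H}\otimes\mathbf C_{r,H}^H\mathbf C_{r,H}$, and for $\mathbf T_R\in\mathbb C^{M(N_1+N_2)\times ML_S}$ define $\tilde e_R(\mathbf T_R,\mathbf S)=\mathrm{Tr}\big[\mathbf C_{0,H}\big(\mathbf I-\mathbf F^H\mathbf T_R^H-\mathbf T_R\mathbf F+\mathbf T_R\mathbf F\mathbf F^H\mathbf T_R^H+\mathbf T_R\mathbf K_R\mathbf T_R^H\big)\big]$ (the weighted MSE of the linear estimator $\mathbf T_R\,\mathrm{vec}(\mathbf Y_R)$ of $\mathrm{vec}([\mathbf W_{H_1},\mathbf W_{H_2}])$). Algorithm 1: initialize feasible $\mathbf S_1,\mathbf S_2$; repeat (a) set $\mathbf T_R=\mathbf F^H(\mathbf F\mathbf F^H+\mathbf K_R)^{-1}$ (LMMSE estimator for the current $\mathbf S$); (b) for this fixed $\mathbf T_R$, set $(\mathbf S_1,\mathbf S_2)$ to a global minimizer of $\tilde e_R(\mathbf T_R,\mathbf S)$ subject to $\mathrm{Tr}(\mathbf S_i\mathbf S_i^H)\le\tau_i$, $i=1,2$ (a convex quadratically constrained quadratic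 program); until the MSE decrease between iterations is below a threshold. *)

theory Defs
  imports "HOL-Analysis.Analysis"
begin

definition hconj :: "complex^'n^'m \<Rightarrow> complex^'m^'n" where
  "hconj A = (\<chi> i j. cnj (A $ j $ i))"

definition herm_pd :: "complex^'n^'n \<Rightarrow> bool" where
  "herm_pd A \<longleftrightarrow> hconj A = A \<and>
     (\<forall>x::complex^'n. x \<noteq> 0 \<longrightarrow>
        Re (\<Sum>i\<in>UNIV. \<Sum>j\<in>UNIV. cnj (x $ i) * A $ i $ j * x $ j) > 0)"

definition kron :: "complex^'b^'a \<Rightarrow> complex^'d^'c \<Rightarrow> complex^('b \<times> 'd)^('a \<times> 'c)" where
  "kron A B = (\<chi> p q. A $ fst p $ fst q * B $ snd p $ snd q)"

definition blkdiag :: "complex^'a^'a \<Rightarrow> complex^'b^'b \<Rightarrow> complex^('a + 'b)^('a + 'b)" where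
  "blkdiag A B = (\<chi> i j. case (i, j) of
       (Inl a, Inl a') \<Rightarrow> A $ a $ a'
     | (Inr b, Inr b') \<Rightarrow> B $ b $ b'
     | _ \<Rightarrow> 0)"

definition stack :: "complex^'l^'a \<Rightarrow> complex^'l^'b \<Rightarrow> complex^'l^('a + 'b)" where
  "stack S1 S2 = (\<chi> i. case i of Inl a \<Rightarrow> S1 $ a | Inr b \<Rightarrow> S2 $ b)"

text \<open>F(S) = S^T C_t \<otimes> C_r (an (L_S M) x ((N1+N2) M) matrix); vec uses column
  stacking, so the index of vec(Y) for Y in C^{M x L_S} is (l, m).\<close>
definition Fmat :: "complex^'l^'n \<Rightarrow> complex^'n^'n \<Rightarrow> complex^'m^'m
                    \<Rightarrow> complex^('n \<times> 'm)^('l \<times> 'm)" where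
  "Fmat S Ct Cr = kron (transpose S ** Ct) Cr"

definition C0mat :: "complex^'n^'n \<Rightarrow> complex^'m^'m \<Rightarrow> complex^('n \<times> 'm)^('n \<times> 'm)" where
  "C0mat Ct Cr = kron (hconj Ct ** Ct) (hconj Cr ** Cr)"

text \<open>Weighted MSE \<tilde>e_R(T_R, S).  The trace is real (the bracket is Hermitian,
  C_0 is Hermitian PSD); we take its real part to obtain a real-valued objective.\<close>
definition eR :: "complex^'n^'n \<Rightarrow> complex^'m^'m \<Rightarrow> complex^('l \<times> 'm)^('l \<times> 'm)
                  \<Rightarrow> complex^('l \<times> 'm)^('n \<times> 'm) \<Rightarrow> complex^'l^'n \<Rightarrow> real" where
  "eR Ct Cr K T S =
     (let F = Fmat S Ct Cr in
      Re (trace (C0mat Ct Cr **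
        (mat 1 - hconj F ** hconj T - T ** F + T ** F ** hconj F ** hconj T
               + T ** K ** hconj T))))"

definition lmmse :: "complex^'n^'n \<Rightarrow> complex^'m^'m \<Rightarrow> complex^('l \<times> 'm)^('l \<times> 'm)
                  \<Rightarrow> complex^'l^'n \<Rightarrow> complex^('l \<times> 'm)^('n \<times> 'm)" where
  "lmmse Ct Cr K S = (let F = Fmat S Ct Cr in hconj F ** matrix_inv (F ** hconj F + K))"

definition pow :: "complex^'l^'a \<Rightarrow> real" where
  "pow S = Re (trace (S ** hconj S))"

definition kkt2 :: "('x::real_normed_vector \<Rightarrow> real) \<Rightarrow> ('x \<Rightarrow> real) \<Rightarrow> ('x \<Rightarrow> real) \<Rightarrow> 'x \<Rightarrow> bool" where
  "kkt2 f g1 g2 x \<longleftrightarrow> g1 x \<le> 0 \<and> g2 x \<le> 0 \<and>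
     (\<exists>\<mu>1 \<mu>2. \<mu>1 \<ge> 0 \<and> \<mu>2 \<ge> 0 \<and> \<mu>1 * g1 x = 0 \<and> \<mu>2 * g2 x = 0 \<and>
        ((\<lambda>y. f y + \<mu>1 * g1 y + \<mu>2 * g2 y) has_derivative (\<lambda>_. 0)) (at x))"

end

theory Submission
  imports Defs "HOL-Analysis.Analysis"
begin

lemma hconj_nth[simp]: "hconj A $ i $ j = cnj (A $ j $ i)"
  by (simp add: hconj_def)

lemma hconj_hconj[simp]: "hconj (hconj A) = A"
  by (simp add: vec_eq_iff)

lemma hconj_add: "hconj (A + B) = hconj A + hconj B"
  by (simp add: vec_eq_iff)

lemma hconj_diff: "hconj (A - B) = hconj A - hconj B"
  by (simp add: vec_eq_iff)

lemma hconj_mult: "hconj (A ** B) = hconj B ** hconj A"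
  by (simp add: vec_eq_iff matrix_matrix_mult_def mult.commute)

lemma hconj_mat[simp]: "hconj (mat 1) = (mat 1 :: complex^'n^'n)"
  by (simp add: vec_eq_iff mat_def)

lemma hconj_zero[simp]: "hconj 0 = 0"
  by (simp add: vec_eq_iff)

lemma matrix_add_rdistrib: "((B + C) ** A) = (B ** A) + (C ** A)"
  by (vector matrix_matrix_mult_def sum.distrib[symmetric] field_simps)

lemma matrix_diff_ldistrib: "((A::'a::ring_1^'n^'m) ** (B - C)) = (A ** B) - (A ** C)"
  by (vector matrix_matrix_mult_def sum_subtractf[symmetric] field_simps)

lemma matrix_diff_rdistrib: "((B - C) ** (A::'a::ring_1^'n^'m)) = (B ** A) - (C ** A)"
  by (vector matrix_matrix_mult_def sum_subtractf[symmetric] field_simps)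

lemma kron_mult: "kron A B ** kron C D = kron (A ** C) (B ** D)"
  unfolding kron_def matrix_matrix_mult_def
  apply (simp add: vec_eq_iff)
  apply (simp add: sum_product)
  apply (subst UNIV_Times_UNIV[symmetric])
  apply (intro allI)
  apply (subst sum.cartesian_product)
  apply (simp add: algebra_simps split_beta)
  done

lemma hconj_kron: "hconj (kron A B) = kron (hconj A) (hconj B)"
  by (simp add: vec_eq_iff kron_def)

lemma kron_mat1: "kron (mat 1) (mat 1) = (mat 1 :: complex^('n::finite\<times>'m::finite)^('n\<times>'m))"
  by (auto simp add: vec_eq_iff kron_def mat_def prod_eq_iff)

lemma blkdiag_mult: "blkdiag A B ** blkdiag C D = blkdiag (A ** C) (B ** D)"
  unfolding blkdiag_def matrix_matrix_mult_def
  apply (simp add: vec_eq_iff UNIV_Plus_UNIV[symmetric] sum.Plus del: UNIV_Plus_UNIV)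
  apply (auto split: sum.splits)
  done

lemma blkdiag_mat1: "blkdiag (mat 1) (mat 1) = mat 1"
  by (auto simp add: vec_eq_iff blkdiag_def mat_def split: sum.splits)

lemma C0_eq: "C0mat Ct Cr = hconj (kron Ct Cr) ** kron Ct Cr"
  by (simp add: C0mat_def hconj_kron kron_mult)

definition qf :: "complex^'n^'n \<Rightarrow> complex^'n \<Rightarrow> complex" where
  "qf M x = (\<Sum>i\<in>UNIV. \<Sum>j\<in>UNIV. cnj (x $ i) * M $ i $ j * x $ j)"

lemma herm_pd_qf: "herm_pd M \<Longrightarrow> x \<noteq> 0 \<Longrightarrow> Re (qf M x) > 0"
  by (simp add: herm_pd_def qf_def)

lemma qf_add: "qf (A + B) x = qf A x + qf B x"
  by (simp add: qf_def algebra_simps sum.distrib)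

lemma qf_FFH: "Re (qf (F ** hconj F) x) \<ge> 0"
proof -
  define w where "w k = (\<Sum>j\<in>UNIV. cnj (F $ j $ k) * x $ j)" for k
  have "(\<Sum>k\<in>UNIV. cnj (w k) * w k) =
        (\<Sum>k\<in>UNIV. \<Sum>i\<in>UNIV. \<Sum>j\<in>UNIV. x $ i * (cnj (x $ j) * (F $ j $ k * cnj (F $ i $ k))))"
    by (simp add: w_def sum_product algebra_simps)
  also have "\<dots> = (\<Sum>i\<in>UNIV. \<Sum>k\<in>UNIV. \<Sum>j\<in>UNIV. x $ i * (cnj (x $ j) * (F $ j $ k * cnj (F $ i $ k))))"
    by (rule sum.swap)
  also have "\<dots> = (\<Sum>i\<in>UNIV. \<Sum>j\<in>UNIV. \<Sum>k\<in>UNIV. x $ i * (cnj (x $ j) * (F $ j $ k * cnj (F $ i $ k))))"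
    by (intro sum.cong refl sum.swap)
  also have "\<dots> = (\<Sum>j\<in>UNIV. \<Sum>i\<in>UNIV. \<Sum>k\<in>UNIV. x $ i * (cnj (x $ j) * (F $ j $ k * cnj (F $ i $ k))))"
    by (rule sum.swap)
  also have "\<dots> = qf (F ** hconj F) x"
    unfolding qf_def matrix_matrix_mult_def
    by (simp add: sum_distrib_left sum_distrib_right algebra_simps)
  finally have eq: "qf (F ** hconj F) x = (\<Sum>k\<in>UNIV. cnj (w k) * w k)" ..
  have "Re (cnj z * z) = (cmod z)^2" for z
    by (simp add: cmod_def power2_eq_square)
  then have "Re (qf (F ** hconj F) x) = (\<Sum>k\<in>UNIV. (cmod (w k))^2)"
    by (simp only: eq Re_sum)
  then show ?thesis by (simp add: sum_nonneg)
qed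

lemma trace_sandwich:
  "Re (trace (Y ** M ** hconj Y)) = (\<Sum>i\<in>UNIV. Re (qf M (\<chi> j. cnj (Y $ i $ j))))"
proof -
  have "(\<Sum>k\<in>UNIV. (\<Sum>j\<in>UNIV. Y $ i $ j * M $ j $ k) * cnj (Y $ i $ k)) =
        (\<Sum>j\<in>UNIV. \<Sum>k\<in>UNIV. cnj (cnj (Y $ i $ j)) * M $ j $ k * cnj (Y $ i $ k))" for i
    by (simp add: sum_distrib_right) (rule sum.swap)
  then show ?thesis
    unfolding trace_def qf_def matrix_matrix_mult_def
    by (simp only: vec_lambda_beta hconj_nth Re_sum)
qed

lemma cmod_sq: "cmod z * cmod z = Re z * Re z + Im z * Im z"
  by (simp add: cmod_def power2_eq_square)

lemma norm_sq_mat: "(norm (A::complex^'n^'m))^2 = (\<Sum>i\<in>UNIV. \<Sum>j\<in>UNIV. (cmod (A $ i $ j))^2)"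
  by (simp add: power2_norm_eq_inner inner_vec_def)

lemma trace_gram: "Re (trace (Y ** hconj Y)) = (norm (Y::complex^'n^'m))^2"
  unfolding norm_sq_mat trace_def matrix_matrix_mult_def
  by (simp add: Re_sum cmod_sq power2_eq_square)

lemma pow_norm: "pow A = (norm A)^2"
  by (simp add: pow_def trace_gram)

lemma qf_scale: "qf M (c *\<^sub>R x) = complex_of_real (c^2) * qf M x"
  unfolding qf_def vector_scaleR_component by (simp add: scaleR_conv_of_real sum_distrib_left algebra_simps power2_eq_square)

lemma qf_cont: "continuous_on UNIV (\<lambda>x. Re (qf M x))"
  unfolding qf_def by (intro continuous_intros)

lemma herm_pd_lower:
  fixes M :: "complex^'n^'n"
  assumes "herm_pd M"
  shows "\<exists>c>0. \<forall>x. c * (norm x)^2 \<le> Re (qf M x)"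
proof -
  obtain b :: "complex^'n" where b: "b \<in> Basis" using nonempty_Basis by blast
  have ne: "sphere (0::complex^'n) 1 \<noteq> {}" using norm_Basis[OF b] by (metis empty_iff mem_sphere_0)
  obtain x0 where x0: "x0 \<in> sphere 0 1" and min: "\<forall>y\<in>sphere 0 1. Re (qf M x0) \<le> Re (qf M y)"
    using continuous_attains_inf[OF compact_sphere ne continuous_on_subset[OF qf_cont[of M] subset_UNIV]] by blast
  have "x0 \<noteq> 0" using x0 by auto
  hence pos: "Re (qf M x0) > 0" using herm_pd_qf[OF assms] by blast
  have "Re (qf M x0) * (norm x)^2 \<le> Re (qf M x)" for x
  proof (cases "x = 0")
    case True then show ?thesis by (simp add: qf_def)
  next
    case False
    define y where "y = (1 / norm x) *\<^sub>R x"
    have "y \<in> sphere 0 1" using False by (simp add: y_def)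
    hence "Re (qf M x0) \<le> Re (qf M y)" using min by blast
    moreover have "x = norm x *\<^sub>R y" using False by (simp add: y_def)
    hence "qf M x = complex_of_real ((norm x)^2) * qf M y" by (metis qf_scale)
    hence "Re (qf M x) = (norm x)^2 * Re (qf M y)" by simp
    ultimately show ?thesis by (metis mult.commute mult_right_mono zero_le_power2)
  qed
  thus ?thesis using pos by blast
qed

lemma qf_mv: "qf M x = (\<Sum>i\<in>UNIV. cnj (x $ i) * (M *v x) $ i)"
  by (simp add: qf_def matrix_vector_mult_def sum_distrib_left mult.assoc)

lemma pd_invertible:
  fixes M :: "complex^'n^'n"
  assumes "\<And>x. x \<noteq> 0 \<Longrightarrow> Re (qf M x) > 0"
  shows "invertible M"
proof -
  have "\<forall>x. M *v x = 0 \<longrightarrow> x = 0"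
  proof (intro allI impI)
    fix x assume "M *v x = 0"
    hence "qf M x = 0" by (simp add: qf_mv)
    thus "x = 0" using assms by force
  qed
  thus ?thesis using matrix_left_invertible_ker invertible_left_inverse by blast
qed

lemma invertible_inv:
  fixes M :: "'a::field^'n^'n"
  assumes "invertible M"
  shows "M ** matrix_inv M = mat 1" "matrix_inv M ** M = mat 1"
proof -
  have "\<exists>A'. M ** A' = mat 1 \<and> A' ** M = mat 1" using assms invertible_def by blast
  hence "M ** matrix_inv M = mat 1 \<and> matrix_inv M ** M = mat 1"
    unfolding matrix_inv_def by (rule someI_ex)
  thus "M ** matrix_inv M = mat 1" "matrix_inv M ** M = mat 1" by auto
qed

lemma hconj_inv:
  fixes M :: "complex^'n^'n"
  assumes "invertible M" "hconj M = M"
  shows "hconj (matrix_inv M) = matrix_inv M"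
proof -
  have "hconj (matrix_inv M) ** M = mat 1"
    using invertible_inv(1)[OF assms(1)] by (metis assms(2) hconj_mat hconj_mult)
  hence "hconj (matrix_inv M) = hconj (matrix_inv M) ** (M ** matrix_inv M)"
    using invertible_inv[OF assms(1)] by simp
  also have "\<dots> = matrix_inv M"
    by (simp add: matrix_mul_assoc \<open>hconj (matrix_inv M) ** M = mat 1\<close>)
  finally show ?thesis .
qed

lemma norm_sq_vec: "(norm (x::complex^'n))^2 = (\<Sum>j\<in>UNIV. (cmod (x $ j))^2)"
  by (simp add: power2_norm_eq_inner inner_vec_def)

lemma linear_mm_left: "linear (\<lambda>X. (H::complex^'n^'m) ** X)"
  by (rule linearI) (simp_all add: matrix_add_ldistrib matrix_scalar_ac scalar_matrix_assoc)

lemma linear_mm_right: "linear (\<lambda>X. X ** (H::complex^'n^'m))"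
  by (rule linearI) (simp_all add: matrix_add_rdistrib scalar_matrix_assoc)

lemma bounded_bilinear_mm: "bounded_bilinear ((**) :: complex^'n^'m \<Rightarrow> complex^'p^'n \<Rightarrow> complex^'p^'m)"
  unfolding bilinear_conv_bounded_bilinear[symmetric] bilinear_def
  using linear_mm_left linear_mm_right by blast

lemma left_inv_norm_bound:
  fixes G :: "complex^'n^'m" and H :: "complex^'m^'n"
  assumes "H ** G = mat 1"
  shows "\<exists>c>0. \<forall>T::complex^'p^'n. norm T \<le> c * norm (G ** T)"
proof -
  have bl: "bounded_linear (\<lambda>X::complex^'p^'m. H ** X)"
    using linear_mm_left[of H] linear_conv_bounded_linear by auto
  obtain c where c: "c > 0" "\<And>X::complex^'p^'m. norm (H ** X) \<le> norm X * c"
    using bounded_linear.pos_bounded[OF bl] by blast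
  have "norm T \<le> c * norm (G ** T)" for T :: "complex^'p^'n"
  proof -
    have "T = H ** (G ** T)" by (simp only: matrix_mul_assoc assms matrix_mul_lid)
    hence "norm T = norm (H ** (G ** T))" by simp
    also have "\<dots> \<le> c * norm (G ** T)" using c(2)[of "G ** T"] by (simp add: mult.commute)
    finally show ?thesis .
  qed
  thus ?thesis using c(1) by blast
qed

lemma C0_sandwich:
  "trace (C0mat Ct Cr ** (D ** M ** hconj D)) =
   trace ((kron Ct Cr ** D) ** M ** hconj (kron Ct Cr ** D))"
proof -
  define G where "G = kron Ct Cr"
  have "trace (C0mat Ct Cr ** (D ** M ** hconj D)) = trace (hconj G ** (G ** (D ** M ** hconj D)))"
    by (simp add: C0_eq G_def matrix_mul_assoc)
  also have "\<dots> = trace ((G ** (D ** M ** hconj D)) ** hconj G)"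
    by (rule trace_mul_sym)
  also have "\<dots> = trace ((G ** D) ** M ** hconj (G ** D))"
    by (simp add: hconj_mult matrix_mul_assoc)
  finally show ?thesis by (simp add: G_def)
qed

lemma C0_gram:
  "Re (trace (C0mat Ct Cr ** (E ** hconj E))) = (norm (kron Ct Cr ** E))^2"
proof -
  define G where "G = kron Ct Cr"
  have "trace (C0mat Ct Cr ** (E ** hconj E)) = trace (hconj G ** (G ** (E ** hconj E)))"
    by (simp add: C0_eq G_def matrix_mul_assoc)
  also have "\<dots> = trace ((G ** (E ** hconj E)) ** hconj G)"
    by (rule trace_mul_sym)
  also have "\<dots> = trace ((G ** E) ** hconj (G ** E))"
    by (simp add: hconj_mult matrix_mul_assoc)
  finally show ?thesis by (simp add: G_def trace_gram)
qed

lemma sandwich_lower: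
  assumes "\<And>y. c * (norm y)^2 \<le> Re (qf M y)"
  shows "c * (norm Y)^2 \<le> Re (trace (Y ** M ** hconj Y))"
proof -
  have "c * (norm Y)^2 = (\<Sum>i\<in>UNIV. c * (norm (\<chi> j. cnj (Y $ i $ j)))^2)"
    by (simp add: norm_sq_mat norm_sq_vec sum_distrib_left)
  also have "\<dots> \<le> (\<Sum>i\<in>UNIV. Re (qf M (\<chi> j. cnj (Y $ i $ j))))"
    by (intro sum_mono assms)
  also have "\<dots> = Re (trace (Y ** M ** hconj Y))" by (simp add: trace_sandwich)
  finally show ?thesis .
qed

lemma C0_lower:
  assumes "\<And>y. c * (norm y)^2 \<le> Re (qf M y)"
  shows "c * (norm (kron Ct Cr ** D))^2 \<le> Re (trace (C0mat Ct Cr ** (D ** M ** hconj D)))"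
  unfolding C0_sandwich by (rule sandwich_lower[OF assms])

lemma trace_C0_add:
  "Re (trace (C0 ** (X + Y))) = Re (trace (C0 ** X)) + Re (trace (C0 ** Y))"
  by (simp add: matrix_add_ldistrib trace_add)

lemma eR_split:
  "eR Ct Cr K T S = (norm (kron Ct Cr ** (mat 1 - T ** Fmat S Ct Cr)))^2
      + Re (trace (C0mat Ct Cr ** (T ** K ** hconj T)))"
proof -
  define F where "F = Fmat S Ct Cr"
  define E where "E = mat 1 - T ** F"
  have "mat 1 - hconj F ** hconj T - T ** F + T ** F ** hconj F ** hconj T + T ** K ** hconj T
        = E ** hconj E + T ** K ** hconj T"
  proof -
    have "E ** hconj E = (mat 1 - hconj F ** hconj T) - (T ** F - T ** F ** hconj F ** hconj T)"
      unfolding E_def hconj_diff hconj_mult hconj_mat matrix_diff_rdistrib matrix_diff_ldistrib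
      by (simp add: matrix_mul_assoc)
    thus ?thesis by (simp add: algebra_simps)
  qed
  hence "eR Ct Cr K T S = Re (trace (C0mat Ct Cr ** (E ** hconj E + T ** K ** hconj T)))"
    unfolding eR_def Let_def F_def[symmetric] by simp
  also have "\<dots> = (norm (kron Ct Cr ** E))^2 + Re (trace (C0mat Ct Cr ** (T ** K ** hconj T)))"
    by (simp only: trace_C0_add C0_gram)
  finally show ?thesis by (simp only: E_def F_def)
qed

lemma eR_nonneg_lower:
  assumes "\<And>y. c * (norm y)^2 \<le> Re (qf K y)" "c \<ge> 0"
  shows "c * (norm (kron Ct Cr ** T))^2 \<le> eR Ct Cr K T S"
  using C0_lower[OF assms(1), of Ct Cr T] unfolding eR_split[of Ct Cr K T S]
  by (smt (verit) zero_le_power2)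

lemma eR_zero: "eR Ct Cr K 0 S = Re (trace (C0mat Ct Cr))"
  by (simp add: eR_def Let_def)

lemma lmmse_opt:
  assumes K: "herm_pd K"
  shows "eR Ct Cr K (lmmse Ct Cr K S) S \<le> eR Ct Cr K T S"
proof -
  define F where "F = Fmat S Ct Cr"
  define M where "M = F ** hconj F + K"
  have posM: "Re (qf M x) > 0" if "x \<noteq> 0" for x
    using qf_FFH[of F x] herm_pd_qf[OF K that] by (simp add: M_def qf_add)
  have invM: "invertible M" using pd_invertible posM by blast
  have hM: "hconj M = M" using K by (simp add: M_def hconj_add hconj_mult herm_pd_def)
  define Mi where "Mi = matrix_inv M"
  have MMi: "M ** Mi = mat 1" and MiM: "Mi ** M = mat 1" using invertible_inv[OF invM] by (simp_all add: Mi_def)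
  have hMi: "hconj Mi = Mi" using hconj_inv[OF invM hM] by (simp add: Mi_def)
  define T0 where "T0 = hconj F ** Mi"
  have lm: "lmmse Ct Cr K S = T0" by (simp add: lmmse_def Let_def T0_def Mi_def M_def F_def)
  define D where "D = T - T0"
  have TD: "T = T0 + D" by (simp add: D_def)
  define B where "B X = mat 1 - hconj F ** hconj X - X ** F + X ** M ** hconj X" for X
  have br: "eR Ct Cr K X S = Re (trace (C0mat Ct Cr ** B X))" for X
  proof -
    have "X ** F ** hconj F ** hconj X + X ** K ** hconj X = X ** M ** hconj X"
      by (simp add: M_def matrix_add_ldistrib matrix_add_rdistrib matrix_mul_assoc)
    thus ?thesis unfolding eR_def Let_def F_def[symmetric] B_def by (simp add: add.assoc)
  qed
  have e1: "T0 ** M = hconj F" by (simp add: T0_def matrix_mul_assoc[symmetric] MiM)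
  have e2: "M ** hconj T0 = F" by (simp add: T0_def hconj_mult hMi matrix_mul_assoc MMi)
  have "T ** M ** hconj T = T0 ** M ** hconj T0 + T0 ** M ** hconj D + D ** M ** hconj T0 + D ** M ** hconj D"
    by (simp add: TD hconj_add matrix_add_ldistrib matrix_add_rdistrib add.assoc)
  also have "T0 ** M ** hconj D = hconj F ** hconj D" by (simp add: e1)
  also have "D ** M ** hconj T0 = D ** F" by (simp add: matrix_mul_assoc[symmetric] e2)
  finally have "B T = B T0 + D ** M ** hconj D"
    unfolding B_def by (simp add: TD hconj_add matrix_add_ldistrib matrix_add_rdistrib algebra_simps)
  hence "eR Ct Cr K T S = eR Ct Cr K T0 S + Re (trace (C0mat Ct Cr ** (D ** M ** hconj D)))"
    by (simp add: br trace_C0_add)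
  moreover have "0 \<le> Re (trace (C0mat Ct Cr ** (D ** M ** hconj D)))"
  proof -
    have "0 * (norm y)^2 \<le> Re (qf M y)" for y
    proof (cases "y = 0")
      case True then show ?thesis by (simp add: qf_def)
    next
      case False then show ?thesis using posM[OF False] by simp
    qed
    from C0_lower[of 0 M, OF this, of Ct Cr D] show ?thesis by simp
  qed
  ultimately show ?thesis using lm by simp
qed

lemma left_inv_gram:
  fixes C :: "complex^'n^'n"
  assumes "herm_pd Z" "Z = C ** hconj C"
  shows "\<exists>H. H ** C = mat 1"
proof -
  have "invertible Z" using pd_invertible herm_pd_qf[OF assms(1)] by blast
  hence "Z ** matrix_inv Z = mat 1" by (rule invertible_inv)
  hence "C ** (hconj C ** matrix_inv Z) = mat 1" by (simp add: assms(2) matrix_mul_assoc)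
  hence "(hconj C ** matrix_inv Z) ** C = mat 1" using matrix_left_right_inverse by blast
  thus ?thesis by blast
qed

lemma left_inv_G:
  assumes "\<exists>H1. H1 ** Ct1 = mat 1" "\<exists>H2. H2 ** Ct2 = mat 1" "\<exists>H3. H3 ** Cr = mat 1"
  shows "\<exists>H. H ** kron (blkdiag Ct1 Ct2) Cr = mat 1"
proof -
  obtain H1 H2 H3 where h: "H1 ** Ct1 = mat 1" "H2 ** Ct2 = mat 1" "H3 ** Cr = mat 1" using assms by blast
  have "kron (blkdiag H1 H2) H3 ** kron (blkdiag Ct1 Ct2) Cr = mat 1"
    by (simp add: kron_mult blkdiag_mult h blkdiag_mat1 kron_mat1)
  thus ?thesis by blast
qed

lemma diff_bl: "bounded_linear l \<Longrightarrow> f differentiable (at x) \<Longrightarrow> (\<lambda>y. l (f y)) differentiable (at x)"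
  by (rule differentiable_compose[OF bounded_linear_imp_differentiable])

lemma diff_mm:
  fixes f :: "'a::real_normed_vector \<Rightarrow> complex^'n^'m" and g :: "'a \<Rightarrow> complex^'p^'n"
  shows "f differentiable (at x) \<Longrightarrow> g differentiable (at x) \<Longrightarrow> (\<lambda>y. f y ** g y) differentiable (at x)"
  unfolding differentiable_def
  using bounded_bilinear.FDERIV[OF bounded_bilinear_mm] by blast

lemma bl_hconj: "bounded_linear (hconj :: complex^'n^'m \<Rightarrow> complex^'m^'n)"
  unfolding linear_conv_bounded_linear[symmetric]
  by (rule linearI) (simp_all add: vec_eq_iff)

lemma bl_transpose: "bounded_linear (transpose :: complex^'n^'m \<Rightarrow> complex^'m^'n)"
  unfolding linear_conv_bounded_linear[symmetric]
  by (rule linearI) (simp_all add: vec_eq_iff transpose_def)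

lemma bl_trace: "bounded_linear (trace :: complex^'n^'n \<Rightarrow> complex)"
  unfolding linear_conv_bounded_linear[symmetric]
  by (rule linearI) (simp_all add: trace_def sum.distrib scaleR_sum_right)

lemma bl_kron: "bounded_linear (\<lambda>A. kron A (B::complex^'d::finite^'c::finite) :: complex^('b::finite \<times> 'd)^('a::finite \<times> 'c))"
  unfolding linear_conv_bounded_linear[symmetric]
  by (rule linearI) (simp_all add: vec_eq_iff kron_def algebra_simps)

lemma bl_stack: "bounded_linear (\<lambda>p. stack (fst p) (snd p) :: complex^'l::finite^('a::finite + 'b::finite))"
  unfolding linear_conv_bounded_linear[symmetric]
  by (rule linearI) (auto simp: vec_eq_iff stack_def split: sum.splits)

lemma diff_eR:
  fixes Ct :: "complex^'n^'n" and Cr :: "complex^'m^'m" and K :: "complex^('l::finite \<times> 'm)^('l \<times> 'm)"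
  shows "(\<lambda>y::(complex^('l \<times> 'm)^('n \<times> 'm)) \<times> (complex^'l^'n). eR Ct Cr K (fst y) (snd y)) differentiable (at x)"
proof -
  have dF: "(\<lambda>y::(complex^('l \<times> 'm)^('n \<times> 'm)) \<times> (complex^'l^'n). Fmat (snd y) Ct Cr) differentiable (at x)"
    unfolding Fmat_def
    by (intro diff_bl[OF bl_kron] diff_mm diff_bl[OF bl_transpose] differentiable_const
        bounded_linear_imp_differentiable[OF bounded_linear_snd])
  have dT: "(\<lambda>y::(complex^('l \<times> 'm)^('n \<times> 'm)) \<times> (complex^'l^'n). fst y) differentiable (at x)"
    by (rule bounded_linear_imp_differentiable[OF bounded_linear_fst])
  show ?thesis
    unfolding eR_def Let_def
    by (intro diff_bl[OF bounded_linear_Re] diff_bl[OF bl_trace] diff_mm differentiable_const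
        differentiable_add differentiable_diff diff_bl[OF bl_hconj] dF dT)
qed

lemma diff_f:
  fixes Ct :: "complex^('a::finite+'b::finite)^('a+'b)" and Cr :: "complex^'m^'m" and K :: "complex^('l::finite \<times> 'm)^('l \<times> 'm)"
  shows "(\<lambda>(Tb::complex^('l \<times> 'm)^(('a+'b) \<times> 'm), A::complex^'l^'a, B::complex^'l^'b). eR Ct Cr K Tb (stack A B)) differentiable (at x)"
proof -
  have e: "(\<lambda>(Tb::complex^('l \<times> 'm)^(('a+'b) \<times> 'm), A::complex^'l^'a, B::complex^'l^'b). eR Ct Cr K Tb (stack A B))
     = (\<lambda>y. eR Ct Cr K (fst y) (snd y)) \<circ> (\<lambda>y. (fst y, stack (fst (snd y)) (snd (snd y))))"
    by (auto simp: fun_eq_iff)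
  have bl2: "bounded_linear (\<lambda>y::(complex^('l \<times> 'm)^(('a+'b) \<times> 'm)) \<times> (complex^'l^'a) \<times> (complex^'l^'b). stack (fst (snd y)) (snd (snd y)))"
    using bounded_linear_compose[OF bl_stack bounded_linear_snd] by (simp add: o_def)
  have "(\<lambda>y::(complex^('l \<times> 'm)^(('a+'b) \<times> 'm)) \<times> (complex^'l^'a) \<times> (complex^'l^'b). (fst y, stack (fst (snd y)) (snd (snd y)))) differentiable (at x)"
    by (intro differentiable_Pair bounded_linear_imp_differentiable[OF bounded_linear_fst]
        bounded_linear_imp_differentiable[OF bl2])
  thus ?thesis unfolding e by (intro differentiable_chain_at diff_eR)
qed

lemma onesided_deriv:
  fixes f :: "'a::real_normed_vector \<Rightarrow> real"
  assumes df: "(f has_derivative D) (at x)"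
    and ev: "eventually (\<lambda>t. f x \<le> f (x + t *\<^sub>R h)) (at_right 0)"
  shows "D h \<ge> 0"
proof (rule ccontr)
  assume neg: "\<not> D h \<ge> 0"
  have bl: "bounded_linear D" using df by (rule has_derivative_bounded_linear)
  have bls: "bounded_linear (\<lambda>t::real. t *\<^sub>R h)" by (rule bounded_linear_scaleR_left)
  have d0: "((\<lambda>t::real. t *\<^sub>R h) has_derivative (\<lambda>t. t *\<^sub>R h)) (at 0)"
    using bls by (rule bounded_linear_imp_has_derivative)
  have d1: "((\<lambda>t::real. x + t *\<^sub>R h) has_derivative (\<lambda>t. 0 + t *\<^sub>R h)) (at 0)"
    by (rule has_derivative_add[OF has_derivative_const d0])
  have df': "(f has_derivative D) (at (x + 0 *\<^sub>R h))" using df by simp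
  have c: "((\<lambda>t. f (x + t *\<^sub>R h)) has_derivative (\<lambda>t. D (0 + t *\<^sub>R h))) (at 0)"
    by (rule has_derivative_compose[OF d1 df'])
  have "(\<lambda>t. D (0 + t *\<^sub>R h)) = (*) (D h)"
    using linear_cmul[OF bounded_linear.linear[OF bl]] by (auto simp: fun_eq_iff mult.commute)
  with c have "DERIV (\<lambda>t. f (x + t *\<^sub>R h)) 0 :> D h"
    by (simp add: has_field_derivative_def)
  from DERIV_neg_dec_right[OF this] neg
  obtain d where d: "d > 0" "\<And>t. t > 0 \<Longrightarrow> t < d \<Longrightarrow> f (x + 0 *\<^sub>R h) > f (x + (0 + t) *\<^sub>R h)"
    by (metis not_le)
  obtain b where b: "b > 0" "\<And>t. t > 0 \<Longrightarrow> t < b \<Longrightarrow> f x \<le> f (x + t *\<^sub>R h)"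
    using ev unfolding eventually_at_right_field by blast
  define t where "t = min d b / 2"
  have t: "t > 0" "t < d" "t < b" using d(1) b(1) by (auto simp: t_def)
  have "f x > f (x + t *\<^sub>R h)" using d(2)[OF t(1,2)] by simp
  moreover have "f x \<le> f (x + t *\<^sub>R h)" using b(2)[OF t(1,3)] .
  ultimately show False by simp
qed

lemma global_min_deriv:
  fixes f :: "'a::real_normed_vector \<Rightarrow> real"
  assumes df: "(f has_derivative D) (at x)"
    and mn: "\<And>t. f x \<le> f (x + t *\<^sub>R h)"
  shows "D h = 0"
proof -
  have bl: "bounded_linear D" using df by (rule has_derivative_bounded_linear)
  have "D h \<ge> 0" using onesided_deriv[OF df] mn by simp
  moreover have "D (- h) \<ge> 0"
  proof (rule onesided_deriv[OF df])
    show "eventually (\<lambda>t. f x \<le> f (x + t *\<^sub>R - h)) (at_right 0)"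
      using mn[of "- _"] by (simp add: scaleR_minus_right[symmetric] del: scaleR_minus_right)
  qed
  moreover have "D (- h) = - D h" using linear_neg[OF bounded_linear.linear[OF bl]] .
  ultimately show ?thesis by linarith
qed

lemma aux_eps: "(\<And>e::real. e > 0 \<Longrightarrow> e * z \<le> y) \<Longrightarrow> 0 \<le> y"
proof (rule ccontr)
  assume h: "\<And>e::real. e > 0 \<Longrightarrow> e * z \<le> y" and "\<not> 0 \<le> y"
  hence y: "y < 0" by simp
  show False
  proof (cases "z < 0")
    case True
    have "(y / (2 * z)) * z \<le> y" using h[of "y / (2*z)"] True y by (simp add: divide_neg_neg)
    thus False using True y by (simp add: field_simps)
  next
    case False
    thus False using h[of 1] y by simp
  qed
qed

lemma kkt_ball:
  fixes a :: "'a::real_inner"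
  assumes bl: "bounded_linear \<phi>" and fa: "(norm a)^2 \<le> \<tau>" and tp: "\<tau> > 0"
    and cond: "\<And>d. (norm a)^2 < \<tau> \<or> inner a d < 0 \<Longrightarrow> \<phi> d \<ge> 0"
  shows "\<exists>\<mu>\<ge>0. \<mu> * ((norm a)^2 - \<tau>) = 0 \<and> (\<forall>d. \<phi> d + \<mu> * (2 * inner a d) = 0)"
proof (cases "(norm a)^2 < \<tau>")
  case True
  have "\<phi> d = 0" for d
    using cond[of d] cond[of "-d"] True linear_neg[OF bounded_linear.linear[OF bl], of d] by linarith
  thus ?thesis by (intro exI[of _ 0]) auto
next
  case False
  hence eq: "(norm a)^2 = \<tau>" using fa by simp
  hence a0: "a \<noteq> 0" using tp by auto
  have na: "(norm a)^2 > 0" using a0 by simp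
  have ia: "inner a a = (norm a)^2" by (simp add: power2_norm_eq_inner)
  have pa: "\<phi> a \<le> 0"
  proof -
    have "inner a (- a) < 0" using na ia by simp
    hence "\<phi> (-a) \<ge> 0" using cond by blast
    thus ?thesis using linear_neg[OF bounded_linear.linear[OF bl], of a] by simp
  qed
  define \<mu> where "\<mu> = - \<phi> a / (2 * (norm a)^2)"
  have mu0: "\<mu> \<ge> 0" using pa na by (simp add: \<mu>_def divide_nonpos_pos)
  have perp: "\<phi> p = 0" if p: "inner a p = 0" for p
  proof -
    have ge: "0 \<le> \<phi> q" if q: "inner a q = 0" for q
    proof (rule aux_eps)
      fix e :: real assume e: "e > 0"
      have "inner a (q - e *\<^sub>R a) < 0" using q e na ia by (simp add: inner_diff_right)
      hence "\<phi> (q - e *\<^sub>R a) \<ge> 0" using cond by blast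
      thus "e * \<phi> a \<le> \<phi> q"
        using linear_diff[OF bounded_linear.linear[OF bl]] linear_cmul[OF bounded_linear.linear[OF bl]] by simp
    qed
    have "0 \<le> \<phi> p" using ge p by blast
    moreover have "0 \<le> \<phi> (- p)" using ge p by simp
    ultimately show ?thesis using linear_neg[OF bounded_linear.linear[OF bl], of p] by linarith
  qed
  have "\<phi> d + \<mu> * (2 * inner a d) = 0" for d
  proof -
    define c where "c = inner a d / (norm a)^2"
    define p where "p = d - c *\<^sub>R a"
    have "inner a p = 0" using na ia by (simp add: p_def c_def inner_diff_right)
    hence p0: "\<phi> p = 0" by (rule perp)
    have dp: "d = p + c *\<^sub>R a" by (simp add: p_def)
    have "\<phi> d = \<phi> p + \<phi> (c *\<^sub>R a)"
      using linear_add[OF bounded_linear.linear[OF bl]] dp by simp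
    also have "\<phi> (c *\<^sub>R a) = c * \<phi> a"
      using linear_cmul[OF bounded_linear.linear[OF bl]] by simp
    finally have "\<phi> d = c * \<phi> a" using p0 by simp
    moreover have "(norm a)^2 \<noteq> 0" using na by simp
    ultimately show ?thesis by (simp add: \<mu>_def c_def field_simps)
  qed
  thus ?thesis using mu0 eq by (intro exI[of _ \<mu>]) auto
qed

lemma norm_add_scale_sq:
  fixes a d :: "'a::real_inner"
  shows "(norm (a + t *\<^sub>R d))^2 = (norm a)^2 + 2 * t * inner a d + t^2 * (norm d)^2"
  by (simp only: power2_norm_eq_inner) (simp add: inner_add_left inner_add_right inner_commute algebra_simps power2_eq_square)

lemma ball_ev:
  fixes a d :: "'a::real_inner"
  assumes fa: "(norm a)^2 \<le> \<tau>" and c: "(norm a)^2 < \<tau> \<or> inner a d < 0"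
  shows "eventually (\<lambda>t. (norm (a + t *\<^sub>R d))^2 \<le> \<tau>) (at_right (0::real))"
proof (cases "(norm a)^2 < \<tau>")
  case True
  have "((\<lambda>t. (norm (a + t *\<^sub>R d))^2) \<longlongrightarrow> (norm (a + 0 *\<^sub>R d))^2) (at_right (0::real))"
    by (intro tendsto_intros)
  hence "((\<lambda>t. (norm (a + t *\<^sub>R d))^2) \<longlongrightarrow> (norm a)^2) (at_right (0::real))" by simp
  from order_tendstoD(2)[OF this True] show ?thesis by (rule eventually_mono) simp
next
  case False
  hence neg: "inner a d < 0" using c by simp
  define b where "b = - 2 * inner a d / ((norm d)^2 + 1)"
  have np: "(norm d)^2 + 1 > 0" by (simp add: add_nonneg_pos)
  have b0: "b > 0" unfolding b_def using neg np by (intro divide_pos_pos) auto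
  have "(norm (a + t *\<^sub>R d))^2 \<le> \<tau>" if t: "t > 0" "t < b" for t
  proof -
    have "t < (- 2 * inner a d) / ((norm d)^2 + 1)" using t(2) by (simp only: b_def)
    hence "t * ((norm d)^2 + 1) < - 2 * inner a d" by (simp only: pos_less_divide_eq[OF np])
    hence "t * (norm d)^2 < - 2 * inner a d" using t(1) by (simp add: algebra_simps)
    hence "t * (t * (norm d)^2) \<le> t * (- 2 * inner a d)" using t(1) by (intro mult_left_mono) auto
    hence "2 * t * inner a d + t^2 * (norm d)^2 \<le> 0" by (simp add: algebra_simps power2_eq_square)
    thus ?thesis using fa by (simp add: norm_add_scale_sq)
  qed
  thus ?thesis unfolding eventually_at_right_field using b0 by blast
qed

theorem theorem1:
  fixes Zt1 Ct1 :: "complex^'n1^'n1"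
    and Zt2 Ct2 :: "complex^'n2^'n2"
    and Zr Cr :: "complex^'m^'m"
    and Kq :: "complex^'l^'l" and Kr :: "complex^'m^'m"
    and \<tau>1 \<tau>2 :: real
    and T :: "nat \<Rightarrow> complex^('l \<times> 'm)^(('n1 + 'n2) \<times> 'm)"
    and S1 :: "nat \<Rightarrow> complex^'l^'n1"
    and S2 :: "nat \<Rightarrow> complex^'l^'n2"
  defines "Ct \<equiv> blkdiag Ct1 Ct2"
    and "KR \<equiv> kron Kq Kr"
  assumes "herm_pd Zt1" and "herm_pd Zt2" and "herm_pd Zr"
    and "Zt1 = Ct1 ** hconj Ct1" and "Zt2 = Ct2 ** hconj Ct2" and "Zr = Cr ** hconj Cr"
    and "herm_pd KR"
    and "\<tau>1 > 0" and "\<tau>2 > 0"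
    and "pow (S1 0) \<le> \<tau>1" and "pow (S2 0) \<le> \<tau>2"
    and step_T: "\<forall>k. T k = lmmse Ct Cr KR (stack (S1 k) (S2 k))"
    and step_S: "\<forall>k. pow (S1 (Suc k)) \<le> \<tau>1 \<and> pow (S2 (Suc k)) \<le> \<tau>2 \<and>
        (\<forall>A B. pow A \<le> \<tau>1 \<longrightarrow> pow B \<le> \<tau>2 \<longrightarrow>
           eR Ct Cr KR (T k) (stack (S1 (Suc k)) (S2 (Suc k))) \<le> eR Ct Cr KR (T k) (stack A B))"
  shows "decseq (\<lambda>k. eR Ct Cr KR (T k) (stack (S1 (Suc k)) (S2 (Suc k)))) \<and>
         convergent (\<lambda>k. eR Ct Cr KR (T k) (stack (S1 (Suc k)) (S2 (Suc k)))) \<and>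
         (\<exists>x. \<exists>r. strict_mono r \<and> ((\<lambda>k. (T (r k), S1 (Suc (r k)), S2 (Suc (r k)))) \<longlonglongrightarrow> x)) \<and>
         (\<forall>x. (\<exists>r. strict_mono r \<and> ((\<lambda>k. (T (r k), S1 (Suc (r k)), S2 (Suc (r k)))) \<longlonglongrightarrow> x)) \<longrightarrow>
            kkt2 (\<lambda>(Tb, A, B). eR Ct Cr KR Tb (stack A B))
                 (\<lambda>(Tb, A, B). pow A - \<tau>1) (\<lambda>(Tb, A, B). pow B - \<tau>2) x)"
proof -
  define v where "v k = eR Ct Cr KR (T k) (stack (S1 (Suc k)) (S2 (Suc k)))" for k
  define w where "w k = eR Ct Cr KR (T (Suc k)) (stack (S1 (Suc k)) (S2 (Suc k)))" for k
  have feas: "pow (S1 k) \<le> \<tau>1 \<and> pow (S2 k) \<le> \<tau>2" for k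
    using step_S \<open>pow (S1 0) \<le> \<tau>1\<close> \<open>pow (S2 0) \<le> \<tau>2\<close> by (cases k) auto
  have opt: "eR Ct Cr KR (T k) (stack (S1 k) (S2 k)) \<le> eR Ct Cr KR T' (stack (S1 k) (S2 k))" for k T'
    using lmmse_opt[OF \<open>herm_pd KR\<close>] step_T by simp
  have vw1: "v (Suc k) \<le> w k" for k
    using step_S feas[of "Suc k"] unfolding v_def w_def by blast
  have vw2: "w k \<le> v k" for k
    using opt[of "Suc k" "T k"] unfolding v_def w_def by simp
  have dec: "decseq v" unfolding decseq_Suc_iff using vw1 vw2 order_trans by blast
  obtain cK where cK: "cK > 0" "\<And>y. cK * (norm y)^2 \<le> Re (qf KR y)"
    using herm_pd_lower[OF \<open>herm_pd KR\<close>] by blast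
  have lowb: "cK * (norm (kron Ct Cr ** X))^2 \<le> eR Ct Cr KR X Y" for X Y
    using eR_nonneg_lower[of cK KR Ct Cr X Y] cK by simp
  have nonneg: "0 \<le> eR Ct Cr KR X Y" for X Y
    using lowb[of X Y] cK(1) by (smt (verit) mult_nonneg_nonneg zero_le_power2)
  have conv: "convergent v"
  proof (rule Bseq_monoseq_convergent)
    show "Bseq v"
    proof (rule BseqI')
      fix n
      have "v n \<le> v 0" using dec by (simp add: decseq_def)
      thus "norm (v n) \<le> v 0" using nonneg[of "T n"] by (simp add: v_def)
    qed
    show "monoseq v" using dec by (simp add: monoseq_def decseq_def)
  qed
  then obtain L where vL: "v \<longlonglongrightarrow> L" using convergent_def by blast
  have wL: "w \<longlonglongrightarrow> L"
  proof (rule tendsto_sandwich[of "\<lambda>k. v (Suc k)" w sequentially v])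
    show "\<forall>\<^sub>F k in sequentially. v (Suc k) \<le> w k" using vw1 by simp
    show "\<forall>\<^sub>F k in sequentially. w k \<le> v k" using vw2 by simp
    show "(\<lambda>k. v (Suc k)) \<longlonglongrightarrow> L" using vL by (rule LIMSEQ_Suc)
    show "v \<longlonglongrightarrow> L" by (rule vL)
  qed
  have P12: "decseq (\<lambda>k. eR Ct Cr KR (T k) (stack (S1 (Suc k)) (S2 (Suc k)))) \<and>
         convergent (\<lambda>k. eR Ct Cr KR (T k) (stack (S1 (Suc k)) (S2 (Suc k))))"
    using dec conv unfolding v_def[abs_def] by simp
  obtain H where H: "H ** kron Ct Cr = mat 1"
    using left_inv_G[OF left_inv_gram[OF \<open>herm_pd Zt1\<close> \<open>Zt1 = Ct1 ** hconj Ct1\<close>]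
        left_inv_gram[OF \<open>herm_pd Zt2\<close> \<open>Zt2 = Ct2 ** hconj Ct2\<close>]
        left_inv_gram[OF \<open>herm_pd Zr\<close> \<open>Zr = Cr ** hconj Cr\<close>]]
    unfolding Ct_def by blast
  obtain c1 where c1: "c1 > 0" "\<And>X::complex^('l \<times> 'm)^(('n1 + 'n2) \<times> 'm). norm X \<le> c1 * norm (kron Ct Cr ** X)"
    using left_inv_norm_bound[OF H, where 'p = "'l \<times> 'm"] by blast
  define R0 where "R0 = Re (trace (C0mat Ct Cr))"
  have Tbnd: "norm (T k) \<le> c1 * sqrt (R0 / cK)" for k
  proof -
    have "cK * (norm (kron Ct Cr ** T k))^2 \<le> eR Ct Cr KR (T k) (stack (S1 k) (S2 k))" by (rule lowb)
    also have "\<dots> \<le> eR Ct Cr KR 0 (stack (S1 k) (S2 k))" by (rule opt)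
    also have "\<dots> = R0" by (simp add: eR_zero R0_def)
    finally have "(norm (kron Ct Cr ** T k))^2 \<le> R0 / cK" using cK(1) by (simp add: field_simps)
    hence "norm (kron Ct Cr ** T k) \<le> sqrt (R0 / cK)" by (rule real_le_rsqrt)
    thus ?thesis using c1(2)[of "T k"] c1(1) by (smt (verit) mult_left_mono)
  qed
  have S1bnd: "norm (S1 k) \<le> sqrt \<tau>1" for k
    using feas[of k] by (intro real_le_rsqrt) (simp add: pow_norm)
  have S2bnd: "norm (S2 k) \<le> sqrt \<tau>2" for k
    using feas[of k] by (intro real_le_rsqrt) (simp add: pow_norm)
  define z where "z k = (T k, S1 (Suc k), S2 (Suc k))" for k
  have "range z \<subseteq> cball 0 (c1 * sqrt (R0 / cK)) \<times> (cball 0 (sqrt \<tau>1) \<times> cball 0 (sqrt \<tau>2))"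
    using Tbnd S1bnd S2bnd by (auto simp: z_def)
  hence bz: "bounded (range z)"
    by (rule bounded_subset[rotated]) (intro bounded_Times bounded_cball)
  obtain l r where lr: "strict_mono r" "(z \<circ> r) \<longlonglongrightarrow> l"
    using bounded_imp_convergent_subsequence[OF bz] by blast
  have P3: "\<exists>x. \<exists>r. strict_mono r \<and> ((\<lambda>k. (T (r k), S1 (Suc (r k)), S2 (Suc (r k)))) \<longlonglongrightarrow> x)"
    using lr by (intro exI[of _ l] exI[of _ r]) (simp add: z_def o_def)
  define f where "f = (\<lambda>(Tb, A, B). eR Ct Cr KR Tb (stack A B))"
  have fapp: "f (a, b, c) = eR Ct Cr KR a (stack b c)" for a b c by (simp add: f_def)
  have fdiff: "f differentiable (at y)" for y unfolding f_def by (rule diff_f)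
  have fcont: "isCont f y" for y using differentiable_imp_continuous_within[OF fdiff] .
  define g1 where "g1 = (\<lambda>(Tb::complex^('l \<times> 'm)^(('n1 + 'n2) \<times> 'm), A::complex^'l^'n1, B::complex^'l^'n2). pow A - \<tau>1)"
  define g2 where "g2 = (\<lambda>(Tb::complex^('l \<times> 'm)^(('n1 + 'n2) \<times> 'm), A::complex^'l^'n1, B::complex^'l^'n2). pow B - \<tau>2)"
  have P4: "kkt2 f g1 g2 x"
    if ex: "\<exists>r. strict_mono r \<and> ((\<lambda>k. (T (r k), S1 (Suc (r k)), S2 (Suc (r k)))) \<longlonglongrightarrow> x)" for x
  proof -
    obtain r where r: "strict_mono r" and zr: "(\<lambda>k. (T (r k), S1 (Suc (r k)), S2 (Suc (r k)))) \<longlonglongrightarrow> x"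
      using ex by blast
    obtain Tb Ab Bb where x: "x = (Tb, Ab, Bb)" by (cases x) auto
    have cT: "(\<lambda>k. T (r k)) \<longlonglongrightarrow> Tb" using tendsto_fst[OF zr] x by simp
    have cA: "(\<lambda>k. S1 (Suc (r k))) \<longlonglongrightarrow> Ab" using tendsto_fst[OF tendsto_snd[OF zr]] x by simp
    have cB: "(\<lambda>k. S2 (Suc (r k))) \<longlonglongrightarrow> Bb" using tendsto_snd[OF tendsto_snd[OF zr]] x by simp
    have feasA: "pow Ab \<le> \<tau>1"
    proof -
      have "(\<lambda>k. pow (S1 (Suc (r k)))) \<longlonglongrightarrow> pow Ab" unfolding pow_norm by (intro tendsto_intros cA)
      thus ?thesis by (rule LIMSEQ_le_const2) (use feas in blast)
    qed
    have feasB: "pow Bb \<le> \<tau>2"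
    proof -
      have "(\<lambda>k. pow (S2 (Suc (r k)))) \<longlonglongrightarrow> pow Bb" unfolding pow_norm by (intro tendsto_intros cB)
      thus ?thesis by (rule LIMSEQ_le_const2) (use feas in blast)
    qed
    have fx: "f x = L"
    proof -
      have "(\<lambda>k. f (T (r k), S1 (Suc (r k)), S2 (Suc (r k)))) \<longlonglongrightarrow> f x"
        by (rule isCont_tendsto_compose[OF fcont zr])
      moreover have "(\<lambda>k. f (T (r k), S1 (Suc (r k)), S2 (Suc (r k)))) = v \<circ> r"
        by (simp add: fun_eq_iff fapp v_def)
      moreover have "(v \<circ> r) \<longlonglongrightarrow> L" by (rule LIMSEQ_subseq_LIMSEQ[OF vL r])
      ultimately show ?thesis using LIMSEQ_unique by metis
    qed
    have minT: "f x \<le> f (T', Ab, Bb)" for T'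
    proof -
      have lim: "(\<lambda>k. f (T', S1 (Suc (r k)), S2 (Suc (r k)))) \<longlonglongrightarrow> f (T', Ab, Bb)"
        by (rule isCont_tendsto_compose[OF fcont]) (intro tendsto_Pair tendsto_const cA cB)
      have wr: "(\<lambda>k. w (r k)) \<longlonglongrightarrow> L" using LIMSEQ_subseq_LIMSEQ[OF wL r] by (simp add: o_def)
      have "w (r k) \<le> f (T', S1 (Suc (r k)), S2 (Suc (r k)))" for k
        using opt[of "Suc (r k)" T'] by (simp add: w_def fapp)
      hence "L \<le> f (T', Ab, Bb)" using LIMSEQ_le[OF wr lim] by blast
      thus ?thesis using fx by simp
    qed
    have minAB: "f x \<le> f (Tb, A, B)" if "pow A \<le> \<tau>1" "pow B \<le> \<tau>2" for A B
    proof -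
      have lim: "(\<lambda>k. f (T (r k), A, B)) \<longlonglongrightarrow> f (Tb, A, B)"
        by (rule isCont_tendsto_compose[OF fcont]) (intro tendsto_Pair tendsto_const cT)
      have vr: "(\<lambda>k. v (r k)) \<longlonglongrightarrow> L" using LIMSEQ_subseq_LIMSEQ[OF vL r] by (simp add: o_def)
      have "v (r k) \<le> f (T (r k), A, B)" for k
        using step_S that by (simp add: v_def fapp)
      hence "L \<le> f (Tb, A, B)" using LIMSEQ_le[OF vr lim] by blast
      thus ?thesis using fx by simp
    qed
    obtain Df where dF: "(f has_derivative Df) (at x)" using fdiff[of x] differentiable_def by blast
    have blD: "bounded_linear Df" using dF by (rule has_derivative_bounded_linear)
    have DT: "Df (h, 0, 0) = 0" for h
    proof (rule global_min_deriv[OF dF])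
      fix t :: real
      show "f x \<le> f (x + t *\<^sub>R (h, 0, 0))" using minT[of "Tb + t *\<^sub>R h"] by (simp add: x)
    qed
    define \<phi>1 where "\<phi>1 d = Df (0, d, 0)" for d
    define \<phi>2 where "\<phi>2 d = Df (0, 0, d)" for d
    have bl1: "bounded_linear \<phi>1"
      unfolding \<phi>1_def[abs_def]
      by (rule bounded_linear_compose[OF blD])
         (intro bounded_linear_Pair bounded_linear_zero bounded_linear_ident)
    have bl2: "bounded_linear \<phi>2"
      unfolding \<phi>2_def[abs_def]
      by (rule bounded_linear_compose[OF blD])
         (intro bounded_linear_Pair bounded_linear_zero bounded_linear_ident)
    have fA: "(norm Ab)^2 \<le> \<tau>1" using feasA by (simp add: pow_norm)
    have fB: "(norm Bb)^2 \<le> \<tau>2" using feasB by (simp add: pow_norm)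
    have cond1: "\<phi>1 d \<ge> 0" if "(norm Ab)^2 < \<tau>1 \<or> inner Ab d < 0" for d
      unfolding \<phi>1_def
    proof (rule onesided_deriv[OF dF])
      show "eventually (\<lambda>t. f x \<le> f (x + t *\<^sub>R (0, d, 0))) (at_right 0)"
        using ball_ev[OF fA that]
      proof (rule eventually_mono)
        fix t :: real assume "(norm (Ab + t *\<^sub>R d))^2 \<le> \<tau>1"
        hence "f x \<le> f (Tb, Ab + t *\<^sub>R d, Bb)" using minAB feasB by (simp add: pow_norm)
        thus "f x \<le> f (x + t *\<^sub>R (0, d, 0))" by (simp add: x)
      qed
    qed
    have cond2: "\<phi>2 d \<ge> 0" if "(norm Bb)^2 < \<tau>2 \<or> inner Bb d < 0" for d
      unfolding \<phi>2_def
    proof (rule onesided_deriv[OF dF])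
      show "eventually (\<lambda>t. f x \<le> f (x + t *\<^sub>R (0, 0, d))) (at_right 0)"
        using ball_ev[OF fB that]
      proof (rule eventually_mono)
        fix t :: real assume "(norm (Bb + t *\<^sub>R d))^2 \<le> \<tau>2"
        hence "f x \<le> f (Tb, Ab, Bb + t *\<^sub>R d)" using minAB feasA by (simp add: pow_norm)
        thus "f x \<le> f (x + t *\<^sub>R (0, 0, d))" by (simp add: x)
      qed
    qed
    obtain \<mu>1 where mu1: "\<mu>1 \<ge> 0" "\<mu>1 * ((norm Ab)^2 - \<tau>1) = 0" "\<And>d. \<phi>1 d + \<mu>1 * (2 * inner Ab d) = 0"
      using kkt_ball[OF bl1 fA \<open>\<tau>1 > 0\<close> cond1] by blast
    obtain \<mu>2 where mu2: "\<mu>2 \<ge> 0" "\<mu>2 * ((norm Bb)^2 - \<tau>2) = 0" "\<And>d. \<phi>2 d + \<mu>2 * (2 * inner Bb d) = 0"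
      using kkt_ball[OF bl2 fB \<open>\<tau>2 > 0\<close> cond2] by blast
    have blfs: "bounded_linear (\<lambda>y::(complex^('l \<times> 'm)^(('n1 + 'n2) \<times> 'm)) \<times> (complex^'l^'n1) \<times> (complex^'l^'n2). fst (snd y))"
      using bounded_linear_compose[OF bounded_linear_fst bounded_linear_snd] by (simp add: o_def)
    have blss: "bounded_linear (\<lambda>y::(complex^('l \<times> 'm)^(('n1 + 'n2) \<times> 'm)) \<times> (complex^'l^'n1) \<times> (complex^'l^'n2). snd (snd y))"
      using bounded_linear_compose[OF bounded_linear_snd bounded_linear_snd] by (simp add: o_def)
    have g1e: "g1 = (\<lambda>y. inner (fst (snd y)) (fst (snd y)) - \<tau>1)"
      by (auto simp: fun_eq_iff g1_def pow_norm power2_norm_eq_inner)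
    have g2e: "g2 = (\<lambda>y. inner (snd (snd y)) (snd (snd y)) - \<tau>2)"
      by (auto simp: fun_eq_iff g2_def pow_norm power2_norm_eq_inner)
    have dg1: "(g1 has_derivative (\<lambda>h. 2 * inner Ab (fst (snd h)))) (at x)"
      unfolding g1e
      by (rule has_derivative_eq_rhs[OF has_derivative_diff[OF has_derivative_inner[OF
            bounded_linear_imp_has_derivative[OF blfs] bounded_linear_imp_has_derivative[OF blfs]]
            has_derivative_const]])
         (auto simp: fun_eq_iff x inner_commute)
    have dg2: "(g2 has_derivative (\<lambda>h. 2 * inner Bb (snd (snd h)))) (at x)"
      unfolding g2e
      by (rule has_derivative_eq_rhs[OF has_derivative_diff[OF has_derivative_inner[OF
            bounded_linear_imp_has_derivative[OF blss] bounded_linear_imp_has_derivative[OF blss]]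
            has_derivative_const]])
         (auto simp: fun_eq_iff x inner_commute)
    have dL: "((\<lambda>y. f y + \<mu>1 * g1 y + \<mu>2 * g2 y) has_derivative
         (\<lambda>h. Df h + \<mu>1 * (2 * inner Ab (fst (snd h))) + \<mu>2 * (2 * inner Bb (snd (snd h))))) (at x)"
      by (intro has_derivative_add has_derivative_mult_right dF dg1 dg2)
    have zero: "Df h + \<mu>1 * (2 * inner Ab (fst (snd h))) + \<mu>2 * (2 * inner Bb (snd (snd h))) = 0" for h
    proof -
      obtain hT hA hB where h: "h = (hT, hA, hB)" by (cases h) auto
      have "h = (hT, 0, 0) + ((0, hA, 0) + (0, 0, hB))" by (simp add: h)
      hence "Df h = Df (hT, 0, 0) + (Df (0, hA, 0) + Df (0, 0, hB))"
        using linear_add[OF bounded_linear.linear[OF blD]] by metis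
      hence "Df h = \<phi>1 hA + \<phi>2 hB" using DT by (simp add: \<phi>1_def \<phi>2_def)
      thus ?thesis using mu1(3)[of hA] mu2(3)[of hB] by (simp add: h)
    qed
    have dL0: "((\<lambda>y. f y + \<mu>1 * g1 y + \<mu>2 * g2 y) has_derivative (\<lambda>_. 0)) (at x)"
      using has_derivative_eq_rhs[OF dL] zero by (simp add: fun_eq_iff)
    have G1: "g1 x \<le> 0" "g2 x \<le> 0" using feasA feasB by (simp_all add: g1_def g2_def x)
    have S1: "\<mu>1 * g1 x = 0" using mu1(2) by (simp add: g1_def x pow_norm)
    have S2: "\<mu>2 * g2 x = 0" using mu2(2) by (simp add: g2_def x pow_norm)
    show ?thesis
      unfolding kkt2_def using G1 S1 S2 mu1(1) mu2(1) dL0 by blast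
  qed
  show ?thesis using P12 P3 P4 unfolding f_def g1_def g2_def by blast
qed

end
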